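(* For every perfect square $n$ and every integer $1\le k\le n$, \[\left|\mathbb E_{x\in\mathcal S(\sqrt n)}[x_1x_2\cdots x_k]\right|\le k^{3k}\,n^{-k/2}.\]
   Context: $\mathcal S(\sqrt n)=\{x\in\{\pm1\}^n:\sum_{i=1}^n x_i=\sqrt n\}$, and $x$ is uniform on $\mathcal S(\sqrt n)$. *)

theory Defs
  imports Complex_Main
begin

text \<open>The slice S(t) = {x in {-1,1}^n : x_1 + ... + x_n = t}; vectors are lists of
length n, coordinate x_i (1-based) is x ! (i-1).\<close>
definition slice :: "nat \<Rightarrow> real \<Rightarrow> int list set" where
  "slice n t = {x. length x = n \<and> set x \<subseteq> {-1, 1} \<and> real_of_int (sum_list x) = t}"

definition unif_expect :: "'a set \<Rightarrow> ('a \<Rightarrow> real) \<Rightarrow> real" where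
  "unif_expect A f = (\<Sum>x\<in>A. f x) / real (card A)"

end

theory Submission
  imports Defs
begin

definition sw :: "nat \<Rightarrow> nat \<Rightarrow> nat \<Rightarrow> nat" where
  "sw a b i = (if i = a then b else if i = b then a else i)"

definition Fs :: "nat \<Rightarrow> real \<Rightarrow> nat set \<Rightarrow> real" where
  "Fs n t I = (\<Sum>x\<in>slice n t. \<Prod>i\<in>I. real_of_int (x!i))"

lemma sw_sw[simp]: "sw a b (sw a b i) = i"
  by (auto simp: sw_def)

lemma sw_inj: "inj (sw a b)"
  by (metis injI sw_sw)

lemma sw_lt: "a < n \<Longrightarrow> b < n \<Longrightarrow> i < n \<Longrightarrow> sw a b i < n"
  by (auto simp: sw_def)

lemma sw_image_lt: assumes "a < n" "b < n" shows "sw a b ` {..<n} = {..<n}"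
proof
  show "sw a b ` {..<n} \<subseteq> {..<n}" using assms sw_lt by auto
  show "{..<n} \<subseteq> sw a b ` {..<n}"
  proof
    fix i assume "i \<in> {..<n}"
    then have "sw a b i \<in> {..<n}" using assms sw_lt by auto
    then show "i \<in> sw a b ` {..<n}" by (metis image_eqI sw_sw)
  qed
qed

definition P :: "nat \<Rightarrow> nat \<Rightarrow> int list \<Rightarrow> int list" where
  "P a b x = map (\<lambda>i. x ! sw a b i) [0..<length x]"

lemma finite_slice: "finite (slice n t)"
proof -
  have "slice n t \<subseteq> {x. set x \<subseteq> {-1,1} \<and> length x = n}"
    by (auto simp: slice_def)
  moreover have "finite {x. set x \<subseteq> {-1::int,1} \<and> length x = n}"
    by (rule finite_lists_length_eq) simp
  ultimately show ?thesis by (rule finite_subset)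
qed

lemma P_slice: assumes "a < n" "b < n" "x \<in> slice n t" shows "P a b x \<in> slice n t"
proof -
  have len: "length x = n" and st: "set x \<subseteq> {-1,1}" and sm: "real_of_int (sum_list x) = t"
    using assms(3) by (auto simp: slice_def)
  have "sum_list (P a b x) = (\<Sum>i<n. x ! sw a b i)"
    unfolding P_def len by (simp add: sum_list_sum_nth atLeast0LessThan)
  also have "\<dots> = (\<Sum>i\<in>sw a b ` {..<n}. x ! i)"
    by (simp add: sum.reindex inj_on_def sw_inj[THEN injD])
  also have "\<dots> = sum_list x"
    using assms len by (simp add: sw_image_lt sum_list_sum_nth atLeast0LessThan)
  finally have s: "sum_list (P a b x) = sum_list x" .
  have "set (P a b x) \<subseteq> set x"
    using assms len sw_lt by (auto simp: P_def)
  then show ?thesis using s len st sm by (auto simp: slice_def P_def)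
qed

lemma P_P: assumes "a < n" "b < n" "length x = n" shows "P a b (P a b x) = x"
  using assms by (auto intro!: nth_equalityI simp: P_def sw_lt)

lemma Fs_swap:
  assumes "a < n" "b < n" "I \<subseteq> {..<n}"
  shows "Fs n t (sw a b ` I) = Fs n t I"
proof -
  have "Fs n t (sw a b ` I) = (\<Sum>x\<in>slice n t. \<Prod>i\<in>I. real_of_int (x ! sw a b i))"
    unfolding Fs_def by (simp add: prod.reindex inj_on_def sw_inj[THEN injD])
  also have "\<dots> = (\<Sum>x\<in>slice n t. \<Prod>i\<in>I. real_of_int (P a b x ! i))"
  proof (rule sum.cong[OF refl], rule prod.cong[OF refl])
    fix x i assume "x \<in> slice n t" "i \<in> I"
    then show "real_of_int (x ! sw a b i) = real_of_int (P a b x ! i)"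
      using assms by (auto simp: P_def slice_def)
  qed
  also have "\<dots> = Fs n t I"
    unfolding Fs_def
    apply (rule sum.reindex_bij_witness[where i="P a b" and j="P a b"])
    using assms P_slice P_P by (auto simp: slice_def)
  finally show ?thesis .
qed


lemma sq_pm1: "v \<in> {-1::int,1} \<Longrightarrow> real_of_int v * real_of_int v = 1"
  by auto

lemma img1: assumes "i < j" shows "sw i (j - 1) ` {..<j - 1} = {..<j} - {i}"
proof
  show "sw i (j - 1) ` {..<j - 1} \<subseteq> {..<j} - {i}" using assms by (auto simp: sw_def)
  show "{..<j} - {i} \<subseteq> sw i (j - 1) ` {..<j - 1}"
  proof
    fix l assume l: "l \<in> {..<j} - {i}"
    have "sw i (j - 1) l \<in> {..<j - 1}" using l assms by (auto simp: sw_def)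
    then show "l \<in> sw i (j - 1) ` {..<j - 1}" by (metis image_eqI sw_sw)
  qed
qed

lemma img2: assumes "j \<le> i" shows "sw i j ` {..<Suc j} = insert i {..<j}"
proof
  show "sw i j ` {..<Suc j} \<subseteq> insert i {..<j}" using assms by (auto simp: sw_def)
  show "insert i {..<j} \<subseteq> sw i j ` {..<Suc j}"
  proof
    fix l assume l: "l \<in> insert i {..<j}"
    have "sw i j l \<in> {..<Suc j}" using l assms by (auto simp: sw_def)
    then show "l \<in> sw i j ` {..<Suc j}" by (metis image_eqI sw_sw)
  qed
qed

lemma split_sum: "j \<le> n \<Longrightarrow> sum f {..<n} = sum f {..<j} + sum f {j..<(n::nat)}"
  by (metis ivl_disj_un_one(2) sum.union_disjoint finite_lessThan finite_atLeastLessThan ivl_disj_int_one(2))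

lemma recur:
  assumes "j < n"
  shows "real m * Fs n (real m) {..<j} = real j * Fs n (real m) {..<j - 1} + real (n - j) * Fs n (real m) {..<Suc j}"
proof -
  let ?S = "slice n (real m)"
  let ?x = "\<lambda>x i. real_of_int (x ! i)"
  have "real m * Fs n (real m) {..<j} = (\<Sum>x\<in>?S. (\<Sum>i<n. ?x x i) * (\<Prod>l<j. ?x x l))"
    unfolding Fs_def sum_distrib_left
  proof (rule sum.cong[OF refl])
    fix x assume "x \<in> ?S"
    then have "length x = n" "real_of_int (sum_list x) = real m" by (auto simp: slice_def)
    then have "real m = (\<Sum>i<n. ?x x i)" by (simp add: sum_list_sum_nth atLeast0LessThan)
    then show "real m * (\<Prod>l<j. ?x x l) = (\<Sum>i<n. ?x x i) * (\<Prod>l<j. ?x x l)" by simp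
  qed
  also have "\<dots> = (\<Sum>i<n. \<Sum>x\<in>?S. ?x x i * (\<Prod>l<j. ?x x l))"
    by (simp add: sum_distrib_right sum.swap[of _ "{..<n}"])
  also have "\<dots> = (\<Sum>i\<in>{..<j}. \<Sum>x\<in>?S. ?x x i * (\<Prod>l<j. ?x x l))
      + (\<Sum>i\<in>{j..<n}. \<Sum>x\<in>?S. ?x x i * (\<Prod>l<j. ?x x l))"
    by (rule split_sum) (use assms in auto)
  also have "(\<Sum>i\<in>{..<j}. \<Sum>x\<in>?S. ?x x i * (\<Prod>l<j. ?x x l)) = (\<Sum>i\<in>{..<j}. Fs n (real m) {..<j - 1})"
  proof (rule sum.cong[OF refl])
    fix i assume i: "i \<in> {..<j}"
    have "(\<Sum>x\<in>?S. ?x x i * (\<Prod>l<j. ?x x l)) = Fs n (real m) ({..<j} - {i})"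
      unfolding Fs_def
    proof (rule sum.cong[OF refl])
      fix x assume x: "x \<in> ?S"
      have "x ! i \<in> set x" using x i assms by (auto simp: slice_def)
      then have "x ! i \<in> {-1,1}" using x by (auto simp: slice_def)
      then have "?x x i * ?x x i = 1" by (rule sq_pm1)
      moreover have "(\<Prod>l<j. ?x x l) = ?x x i * (\<Prod>l\<in>{..<j} - {i}. ?x x l)"
        using i by (simp add: prod.remove)
      ultimately show "?x x i * (\<Prod>l<j. ?x x l) = (\<Prod>l\<in>{..<j} - {i}. ?x x l)"
        by (metis mult.assoc mult_1)
    qed
    also have "\<dots> = Fs n (real m) {..<j - 1}"
      using img1[of i j] Fs_swap[of i n "j - 1" "{..<j - 1}" "real m"] i assms by auto
    finally show "(\<Sum>x\<in>?S. ?x x i * (\<Prod>l<j. ?x x l)) = Fs n (real m) {..<j - 1}" .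
  qed
  also have "(\<Sum>i\<in>{j..<n}. \<Sum>x\<in>?S. ?x x i * (\<Prod>l<j. ?x x l)) = (\<Sum>i\<in>{j..<n}. Fs n (real m) {..<Suc j})"
  proof (rule sum.cong[OF refl])
    fix i assume i: "i \<in> {j..<n}"
    have "(\<Sum>x\<in>?S. ?x x i * (\<Prod>l<j. ?x x l)) = Fs n (real m) (insert i {..<j})"
      unfolding Fs_def using i by (simp add: prod.insert)
    also have "\<dots> = Fs n (real m) {..<Suc j}"
      using img2[of j i] Fs_swap[of i n j "{..<Suc j}" "real m"] i assms by auto
    finally show "(\<Sum>x\<in>?S. ?x x i * (\<Prod>l<j. ?x x l)) = Fs n (real m) {..<Suc j}" .
  qed
  finally show ?thesis by simp
qed


fun aseq :: "nat \<Rightarrow> real" where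
  "aseq 0 = 1"
| "aseq (Suc 0) = 1"
| "aseq (Suc (Suc j)) = 2 * (aseq (Suc j) + real (Suc j) * aseq j)"

lemma aseq_nonneg: "aseq j \<ge> 0"
  by (induction j rule: aseq.induct) auto

lemma aseq_le: "aseq k \<le> real k ^ (3 * k)"
proof (induction k rule: aseq.induct)
  case 1 then show ?case by simp
next
  case 2 then show ?case by simp
next
  case (3 j)
  show ?case
  proof (cases "j = 0")
    case True then show ?thesis by simp
  next
    case False
    let ?a = "real j" and ?b = "real j + 1" and ?c = "real j + 2"
    have h1: "aseq (Suc j) \<le> ?b ^ (3 * j + 3)" using 3(1) by (simp add: add.commute)
    have h2: "aseq j \<le> ?a ^ (3 * j)" using 3(2) by simp
    have "?a ^ (3 * j) \<le> ?b ^ (3 * j)" by (rule power_mono) auto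
    then have "?b * ?a ^ (3 * j) \<le> ?b * ?b ^ (3 * j)" by (rule mult_left_mono) auto
    also have "\<dots> = ?b ^ (3 * j + 1)" by simp
    also have "\<dots> \<le> ?b ^ (3 * j + 3)" by (rule power_increasing) auto
    finally have h3: "?b * ?a ^ (3 * j) \<le> ?b ^ (3 * j + 3)" .
    have "aseq (Suc (Suc j)) = 2 * (aseq (Suc j) + ?b * aseq j)" by simp
    also have "\<dots> \<le> 2 * (?b ^ (3 * j + 3) + ?b * ?a ^ (3 * j))"
      using h1 h2 by (intro mult_left_mono add_mono) auto
    also have "\<dots> \<le> 4 * ?b ^ (3 * j + 3)" using h3 by simp
    also have "\<dots> \<le> ?c ^ 3 * ?c ^ (3 * j + 3)"
    proof (rule mult_mono)
      have "(3::real) ^ 3 \<le> ?c ^ 3" using False by (intro power_mono) auto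
      then show "4 \<le> ?c ^ 3" by simp
      show "?b ^ (3 * j + 3) \<le> ?c ^ (3 * j + 3)" by (rule power_mono) auto
    qed auto
    also have "\<dots> = ?c ^ (3 * j + 6)" by (simp add: power_add[symmetric])
    finally show ?thesis by (simp add: algebra_simps)
  qed
qed

lemma Fs0: "Fs n t {..<0} = real (card (slice n t))"
  by (simp add: Fs_def)

lemma Fs_empty: "Fs n t {} = real (card (slice n t))"
  by (simp add: Fs_def)

lemma Fs_abs_le: assumes "I \<subseteq> {..<n}" shows "\<bar>Fs n t I\<bar> \<le> real (card (slice n t))"
proof -
  have "\<bar>Fs n t I\<bar> \<le> (\<Sum>x\<in>slice n t. \<bar>\<Prod>i\<in>I. real_of_int (x!i)\<bar>)"
    unfolding Fs_def by (rule sum_abs)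
  also have "\<dots> \<le> (\<Sum>x\<in>slice n t. 1)"
  proof (rule sum_mono)
    fix x assume x: "x \<in> slice n t"
    have "\<bar>\<Prod>i\<in>I. real_of_int (x!i)\<bar> = (\<Prod>i\<in>I. \<bar>real_of_int (x!i)\<bar>)" by (rule abs_prod)
    also have "\<dots> \<le> (\<Prod>i\<in>I. 1)"
    proof (rule prod_mono)
      fix i assume "i \<in> I"
      show "0 \<le> \<bar>real_of_int (x!i)\<bar> \<and> \<bar>real_of_int (x!i)\<bar> \<le> 1"
      proof -
        have "i < length x" using \<open>i \<in> I\<close> assms x by (auto simp: slice_def)
        then have "x ! i \<in> set x" by simp
        then have "x ! i \<in> {-1,1}" using x by (auto simp: slice_def)
        then show ?thesis by auto
      qed
    qed
    finally show "\<bar>\<Prod>i\<in>I. real_of_int (x!i)\<bar> \<le> 1" by simp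
  qed
  finally show ?thesis by simp
qed


lemma bound_ind:
  assumes nm: "n = m ^ 2" and m: "m \<ge> 1"
  shows "2 * j \<le> n \<Longrightarrow>
     \<bar>Fs n (real m) {..<j}\<bar> \<le> aseq j * real (card (slice n (real m))) / real m ^ j \<and>
     \<bar>Fs n (real m) {..<Suc j}\<bar> \<le> aseq (Suc j) * real (card (slice n (real m))) / real m ^ Suc j"
proof (induction j)
  case 0
  let ?c = "real (card (slice n (real m)))"
  have n0: "0 < n" using nm m by simp
  have "real m * ?c = real n * Fs n (real m) {..<1}"
    using recur[OF n0, of m] by (simp add: Fs_empty)
  then have "real m * ?c = real m * (real m * Fs n (real m) {..<1})" using nm by (simp add: power2_eq_square)
  then have "?c = real m * Fs n (real m) {..<1}" using m by simp
  then have "Fs n (real m) {..<1} = ?c / real m" using m by (simp add: field_simps)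
  then show ?case by (simp add: Fs_empty)
next
  case (Suc j)
  let ?c = "real (card (slice n (real m)))"
  let ?F = "\<lambda>j. Fs n (real m) {..<j}"
  let ?m = "real m"
  from Suc.prems have IH: "\<bar>?F j\<bar> \<le> aseq j * ?c / ?m ^ j" "\<bar>?F (Suc j)\<bar> \<le> aseq (Suc j) * ?c / ?m ^ Suc j"
    using Suc.IH by auto
  have jn: "Suc j < n" using Suc.prems by simp
  have rec: "?m * ?F (Suc j) = real (Suc j) * ?F j + real (n - Suc j) * ?F (Suc (Suc j))"
    using recur[OF jn, of m] by simp
  define d where "d = real (n - Suc j)"
  have dge: "d \<ge> real n / 2" using Suc.prems unfolding d_def by (simp add: of_nat_diff)
  have npos: "real n > 0" using jn by simp
  have dpos: "d > 0" using dge npos by linarith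
  have mpos: "?m > 0" using m by simp
  have cnn: "?c \<ge> 0" by simp
  define R where "R = (aseq (Suc j) + real (Suc j) * aseq j) * ?c / ?m ^ j"
  have "d * \<bar>?F (Suc (Suc j))\<bar> = \<bar>?m * ?F (Suc j) - real (Suc j) * ?F j\<bar>"
    using rec dpos unfolding d_def by (simp add: abs_mult)
  also have "\<dots> \<le> ?m * \<bar>?F (Suc j)\<bar> + real (Suc j) * \<bar>?F j\<bar>"
    using mpos abs_triangle_ineq4[of "?m * ?F (Suc j)" "real (Suc j) * ?F j"] by (simp add: abs_mult)
  also have "\<dots> \<le> ?m * (aseq (Suc j) * ?c / ?m ^ Suc j) + real (Suc j) * (aseq j * ?c / ?m ^ j)"
    using IH mpos by (intro add_mono mult_left_mono) auto
  also have "\<dots> = R" unfolding R_def using mpos by (simp add: field_simps)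
  finally have dR: "d * \<bar>?F (Suc (Suc j))\<bar> \<le> R" .
  have Rnn: "R \<ge> 0" unfolding R_def using aseq_nonneg mpos by auto
  have "(real n / 2) * \<bar>?F (Suc (Suc j))\<bar> \<le> d * \<bar>?F (Suc (Suc j))\<bar>"
    using dge by (intro mult_right_mono) auto
  with dR have "(real n / 2) * \<bar>?F (Suc (Suc j))\<bar> \<le> R" by linarith
  then have "\<bar>?F (Suc (Suc j))\<bar> \<le> 2 * R / real n" using npos by (simp add: field_simps)
  also have "2 * R / real n = aseq (Suc (Suc j)) * ?c / ?m ^ Suc (Suc j)"
    unfolding R_def nm using mpos by (simp add: field_simps power2_eq_square)
  finally show ?case using IH by simp
qed

theorem corollaryB7:
  fixes n k :: nat
  assumes "\<exists>m::nat. n = m ^ 2"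
    and "1 \<le> k" and "k \<le> n"
  shows "\<bar>unif_expect (slice n (sqrt (real n))) (\<lambda>x. \<Prod>i<k. real_of_int (x ! i))\<bar>
           \<le> real k ^ (3 * k) * real n powr (- real k / 2)"
proof -
  obtain m :: nat where nm: "n = m ^ 2" using assms(1) by blast
  have m: "m \<ge> 1" using nm assms by (cases m) auto
  have mpos: "real m > 0" using m by simp
  have sq: "sqrt (real n) = real m" using nm by simp
  have pw: "real n powr (- real k / 2) = 1 / real m ^ k"
  proof -
    have "real n = real m powr 2" using nm mpos by (simp add: powr_realpow)
    then have "real n powr (- real k / 2) = real m powr (2 * (- real k / 2))"
      by (metis powr_powr)
    also have "\<dots> = real m powr (- real k)" by simp
    also have "\<dots> = 1 / real m ^ k" using mpos by (simp add: powr_minus powr_realpow divide_inverse)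
    finally show ?thesis .
  qed
  let ?c = "real (card (slice n (real m)))"
  let ?F = "Fs n (real m) {..<k}"
  have ue: "unif_expect (slice n (sqrt (real n))) (\<lambda>x. \<Prod>i<k. real_of_int (x ! i)) = ?F / ?c"
    unfolding unif_expect_def sq Fs_def by simp
  have goal: "\<bar>?F\<bar> / ?c \<le> real k ^ (3 * k) / real m ^ k"
  proof (cases "?c = 0")
    case True then show ?thesis by simp
  next
    case False
    then have cpos: "?c > 0" by simp
    show ?thesis
    proof (cases "2 * (k - 1) \<le> n")
      case True
      have "\<bar>?F\<bar> \<le> aseq k * ?c / real m ^ k"
        using bound_ind[OF nm m True] assms(2) by simp
      also have "\<dots> \<le> real k ^ (3 * k) * ?c / real m ^ k"
        using aseq_le[of k] cpos mpos by (intro divide_right_mono mult_right_mono) auto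
      finally show ?thesis using cpos by (simp add: field_simps)
    next
      case False
      have "\<bar>?F\<bar> \<le> ?c" by (rule Fs_abs_le) (use assms in auto)
      then have l1: "\<bar>?F\<bar> / ?c \<le> 1" using cpos by simp
      have k2: "k \<ge> 2" using False assms by auto
      have "2 * k > n" using False by linarith
      moreover have "2 * k \<le> k ^ 6"
      proof -
        have "2 * k \<le> k * k" using k2 by simp
        also have "\<dots> = k ^ 2" by (simp add: power2_eq_square)
        also have "\<dots> \<le> k ^ 6" by (rule power_increasing) (use k2 in auto)
        finally show ?thesis .
      qed
      ultimately have "m ^ 2 \<le> (k ^ 3) ^ 2" using nm by (simp add: power_mult[symmetric])
      then have "m \<le> k ^ 3" using power2_le_imp_le by blast
      then have "m ^ k \<le> (k ^ 3) ^ k" by (rule power_mono) simp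
      then have "real m ^ k \<le> real k ^ (3 * k)"
        by (metis of_nat_le_iff of_nat_power power_mult)
      then have "1 \<le> real k ^ (3 * k) / real m ^ k" using mpos by simp
      with l1 show ?thesis by linarith
    qed
  qed
  show ?thesis unfolding ue pw using goal by (simp add: abs_div_pos)
qed

end
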